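(* Let $X=[0,1[$ and let $\widehat{\operatorname{PC}^{\bowtie}}$ be the group of all bijections $X\to X$ that are continuous outside a finite subset of $X$. Let ${\mathfrak S}_{\mathrm{fin}}\subset \widehat{\operatorname{PC}^{\bowtie}}$ be the subgroup of finitely supported permutations of $X$ and $\varepsilon_{\mathrm{fin}}:{\mathfrak S}_{\mathrm{fin}}\to \mathbb{Z}/2\mathbb{Z}$ the classical signature. Then there exists a group homomorphism $\varepsilon:\widehat{\operatorname{PC}^{\bowtie}}\to \mathbb{Z}/2\mathbb{Z}$ whose restriction to ${\mathfrak S}_{\mathrm{fin}}$ equals $\varepsilon_{\mathrm{fin}}$.
   Context: A permutation of $X$ is finitely supported if it moves only finitely many points. The classical signature of a finitely supported permutation is its sign, written additively in $\mathbb{Z}/2\mathbb{Z}$. *)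

theory Defs
  imports "HOL-Analysis.Analysis" "HOL-Library.Z2" "HOL-Combinatorics.Permutations"
begin

definition X01 :: "real set" where
  "X01 = {0..<1}"

text \<open>Bijections of X are represented as maps real => real that are the identity
  outside X (canonical extension).\<close>
definition PChat :: "(real \<Rightarrow> real) set" where
  "PChat = {f. bij_betw f X01 X01 \<and> (\<forall>x. x \<notin> X01 \<longrightarrow> f x = x) \<and>
     (\<exists>F. finite F \<and> F \<subseteq> X01 \<and> (\<forall>x \<in> X01 - F. continuous (at x within X01) f))}"

definition Sfin :: "(real \<Rightarrow> real) set" where
  "Sfin = {f. bij_betw f X01 X01 \<and> (\<forall>x. x \<notin> X01 \<longrightarrow> f x = x) \<and> finite {x. f x \<noteq> x}}"

definition eps_fin :: "(real \<Rightarrow> real) \<Rightarrow> bit" where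
  "eps_fin f = (if evenperm f then 0 else 1)"

end

theory Submission imports Defs begin

definition nxt :: "real set \<Rightarrow> real \<Rightarrow> real" where
  "nxt P p = Min (insert 1 {q\<in>P. p < q})"
definition pc :: "real set \<Rightarrow> real \<Rightarrow> real set" where
  "pc P p = {p<..<nxt P p}"

lemma nxt_props:
  assumes "finite P" "P \<subseteq> X01" "p \<in> P"
  shows "p < nxt P p" "nxt P p \<le> 1" "nxt P p \<in> P \<or> nxt P p = 1"
    "\<And>q. q \<in> P \<Longrightarrow> p < q \<Longrightarrow> nxt P p \<le> q"
proof -
  have fin: "finite (insert 1 {q\<in>P. p < q})" using assms by auto
  have p1: "p < 1" using assms by (auto simp: X01_def)
  show "p < nxt P p" unfolding nxt_def using fin p1 by (subst Min_gr_iff) auto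
  show "nxt P p \<le> 1" unfolding nxt_def using fin by auto
  show "nxt P p \<in> P \<or> nxt P p = 1"
    using Min_in[OF fin] unfolding nxt_def by auto
  show "\<And>q. q \<in> P \<Longrightarrow> p < q \<Longrightarrow> nxt P p \<le> q" unfolding nxt_def using fin by auto
qed

lemma pc_sub: "finite P \<Longrightarrow> P \<subseteq> X01 \<Longrightarrow> p \<in> P \<Longrightarrow> pc P p \<subseteq> X01"
  using nxt_props[of P p] by (auto simp: pc_def X01_def)

lemma pc_disj_P: "finite P \<Longrightarrow> P \<subseteq> X01 \<Longrightarrow> p \<in> P \<Longrightarrow> pc P p \<inter> P = {}"
  using nxt_props[of P p] by (force simp: pc_def)

lemma pc_ne: "finite P \<Longrightarrow> P \<subseteq> X01 \<Longrightarrow> p \<in> P \<Longrightarrow> pc P p \<noteq> {}"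
  using nxt_props[of P p] by (auto simp: pc_def)

lemma pc_disj: "finite P \<Longrightarrow> P \<subseteq> X01 \<Longrightarrow> p \<in> P \<Longrightarrow> p' \<in> P \<Longrightarrow> p \<noteq> p' \<Longrightarrow> pc P p \<inter> pc P p' = {}"
proof -
  assume a: "finite P" "P \<subseteq> X01" "p \<in> P" "p' \<in> P" "p \<noteq> p'"
  { fix u v assume "u \<in> P" "v \<in> P" "u < v"
    hence "nxt P u \<le> v" using nxt_props[of P u] a by auto
    hence "pc P u \<inter> pc P v = {}" by (auto simp: pc_def) }
  note h = this
  show ?thesis
  proof (cases "p < p'")
    case True thus ?thesis using h a by blast
  next
    case False hence "p' < p" using a by auto
    thus ?thesis using h[of p' p] a by blast
  qed
qed

lemma pc_cover:
  assumes "finite P" "P \<subseteq> X01" "0 \<in> P" "x \<in> X01" "x \<notin> P"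
  shows "\<exists>p\<in>P. x \<in> pc P p"
proof -
  let ?S = "{q\<in>P. q < x}"
  have x0: "0 < x" using assms by (auto simp: X01_def order_le_less)
  have fin: "finite ?S" "?S \<noteq> {}" using assms x0 by auto
  define p where "p = Max ?S"
  have pS: "p \<in> ?S" using Min_in fin p_def Max_in by auto
  have "x < nxt P p"
  proof -
    have "nxt P p \<noteq> x" using nxt_props[of P p] pS assms by (auto simp: X01_def)
    moreover have "\<not> nxt P p < x"
    proof
      assume "nxt P p < x"
      moreover have "nxt P p \<in> P" using nxt_props[of P p] pS assms \<open>nxt P p < x\<close> by (auto simp: X01_def)
      ultimately have "nxt P p \<le> p" unfolding p_def using fin by auto
      thus False using nxt_props[of P p] pS assms by auto
    qed
    ultimately show ?thesis by auto
  qed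
  thus ?thesis using pS by (auto simp: pc_def)
qed

definition validP :: "(real \<Rightarrow> real) \<Rightarrow> real set \<Rightarrow> bool" where
  "validP f P \<longleftrightarrow> finite P \<and> 0 \<in> P \<and> P \<subseteq> X01 \<and> (\<forall>x\<in>X01 - P. continuous (at x within X01) f)"

lemma cont_pc:
  assumes "validP f P" "p \<in> P"
  shows "continuous_on (pc P p) f"
proof -
  have fin: "finite P" "P \<subseteq> X01" using assms by (auto simp: validP_def)
  { fix x assume x: "x \<in> pc P p"
    hence xi: "x \<in> interior X01" using nxt_props[OF fin assms(2)] fin assms(2)
      by (auto simp: pc_def X01_def)
    have "x \<in> X01 - P" using x pc_disj_P[OF fin assms(2)] interior_subset xi by blast
    hence "continuous (at x within X01) f" using assms by (auto simp: validP_def)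
    hence "isCont f x" using at_within_interior[OF xi] by simp }
  thus ?thesis by (simp add: continuous_at_imp_continuous_on)
qed

lemma mono_pc:
  assumes "bij_betw f X01 X01" "validP f P" "p \<in> P"
  shows "strict_mono_on (pc P p) f \<or> strict_antimono_on (pc P p) f"
proof -
  have fin: "finite P" "P \<subseteq> X01" using assms by (auto simp: validP_def)
  have "inj_on f (pc P p)" using assms(1) pc_sub[OF fin assms(3)] bij_betw_imp_inj_on inj_on_subset by blast
  thus ?thesis using injective_eq_monotone_map[of "pc P p" f] cont_pc[OF assms(2,3)]
    by (simp add: pc_def)
qed

lemma img_pc:
  assumes "bij_betw f X01 X01" "validP f P" "p \<in> P"
  shows "f ` pc P p = {Inf (f ` pc P p)<..<Sup (f ` pc P p)}" "Inf (f ` pc P p) < Sup (f ` pc P p)"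
proof -
  have fin: "finite P" "P \<subseteq> X01" using assms by (auto simp: validP_def)
  define I where "I = pc P p"
  define J where "J = f ` I"
  have IX: "I \<subseteq> X01" using pc_sub[OF fin assms(3)] I_def by simp
  have JX: "J \<subseteq> X01" using IX assms(1) J_def bij_betw_imp_surj_on by blast
  have Ine: "I \<noteq> {}" using pc_ne[OF fin assms(3)] I_def by simp
  hence Jne: "J \<noteq> {}" using J_def by simp
  have bb: "bdd_below J" "bdd_above J" using JX unfolding X01_def bdd_below_def bdd_above_def
    by (metis atLeastLessThan_iff less_imp_le subsetD)+
  have noext: "\<exists>y'\<in>I. f y' < f y" "\<exists>y'\<in>I. f y < f y'" if y: "y \<in> I" for y
  proof -
    have lo: "(p + y)/2 \<in> I" "(p+y)/2 < y" using y by (auto simp: I_def pc_def)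
    have hi: "(y + nxt P p)/2 \<in> I" "y < (y + nxt P p)/2" using y by (auto simp: I_def pc_def)
    have "strict_mono_on I f \<or> strict_antimono_on I f" using mono_pc[OF assms] I_def by simp
    thus "\<exists>y'\<in>I. f y' < f y" "\<exists>y'\<in>I. f y < f y'"
      unfolding monotone_on_def using lo hi y by metis+
  qed
  have sub1: "J \<subseteq> {Inf J<..<Sup J}"
  proof
    fix t assume "t \<in> J"
    then obtain y where y: "y \<in> I" "t = f y" using J_def by auto
    obtain a b where "a \<in> I" "f a < f y" "b \<in> I" "f y < f b" using noext[OF y(1)] by blast
    hence "Inf J \<le> f a" "f b \<le> Sup J" using bb J_def by (auto intro: cInf_lower cSup_upper)
    thus "t \<in> {Inf J<..<Sup J}" using y \<open>f a < f y\<close> \<open>f y < f b\<close> by auto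
  qed
  have conn: "connected J" unfolding J_def I_def
    by (rule connected_continuous_image[OF cont_pc[OF assms(2,3)]]) (simp add: pc_def)
  have sub2: "{Inf J<..<Sup J} \<subseteq> J"
  proof
    fix t assume t: "t \<in> {Inf J<..<Sup J}"
    obtain u where "u \<in> J" "u < t" using cInf_lessD[OF Jne] t by auto
    moreover obtain v where "v \<in> J" "t < v" using less_cSupD[OF Jne] t by auto
    ultimately show "t \<in> J" using conn unfolding connected_iff_interval by (meson less_imp_le)
  qed
  show "f ` pc P p = {Inf (f ` pc P p)<..<Sup (f ` pc P p)}" using sub1 sub2 J_def I_def by auto
  obtain t where "t \<in> J" using Jne by auto
  thus "Inf (f ` pc P p) < Sup (f ` pc P p)" using sub1 J_def I_def by fastforce
qed

definition sg :: "(real \<Rightarrow> real) \<Rightarrow> real set \<Rightarrow> real \<Rightarrow> real" where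
  "sg f P p = Inf (f ` pc P p)"

lemma img_disj:
  assumes "bij_betw f X01 X01" "validP f P" "p \<in> P" "p' \<in> P" "p \<noteq> p'"
  shows "f ` pc P p \<inter> f ` pc P p' = {}"
proof -
  have fin: "finite P" "P \<subseteq> X01" using assms by (auto simp: validP_def)
  have "inj_on f X01" using assms(1) bij_betw_imp_inj_on by blast
  thus ?thesis using pc_disj[OF fin assms(3-5)] pc_sub[OF fin assms(3)] pc_sub[OF fin assms(4)]
    by (auto simp: inj_on_def) blast
qed

lemma img_cover:
  assumes "bij_betw f X01 X01" "validP f P" "t \<in> X01" "t \<notin> f ` P"
  shows "\<exists>p'\<in>P. t \<in> f ` pc P p'"
proof -
  have fin: "finite P" "P \<subseteq> X01" "0 \<in> P" using assms by (auto simp: validP_def)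
  obtain z where z: "z \<in> X01" "t = f z" using assms(1,3) bij_betw_imp_surj_on by blast
  hence "z \<notin> P" using assms(4) by auto
  then obtain p' where "p' \<in> P" "z \<in> pc P p'" using pc_cover[OF fin z(1)] by blast
  thus ?thesis using z by blast
qed

lemma sg_main:
  assumes bij: "bij_betw f X01 X01" and v: "validP f P" and pP: "p \<in> P"
  shows "sg f P p \<in> f ` P" "f ` pc P p = pc (f ` P) (sg f P p)"
proof -
  have fin: "finite P" "P \<subseteq> X01" "0 \<in> P" using v by (auto simp: validP_def)
  have Q: "finite (f ` P)" "f ` P \<subseteq> X01" using fin bij bij_betw_imp_surj_on by blast+
  define c where "c = Inf (f ` pc P p)"
  define d where "d = Sup (f ` pc P p)"
  have J: "f ` pc P p = {c<..<d}" "c < d" using img_pc[OF bij v pP] c_def d_def by auto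
  have JX: "f ` pc P p \<subseteq> X01" using pc_sub[OF fin(1,2) pP] bij bij_betw_imp_surj_on by blast
  have d1: "d \<le> 1"
  proof (rule ccontr)
    assume "\<not> d \<le> 1"
    hence "max c 1 < d" using J by auto
    hence "(max c 1 + d)/2 \<in> f ` pc P p" using J by auto
    hence "(max c 1 + d)/2 \<in> X01" using JX by blast
    thus False using \<open>max c 1 < d\<close> by (auto simp: X01_def)
  qed
  have c0: "0 \<le> c"
  proof (rule ccontr)
    assume "\<not> 0 \<le> c"
    hence "c < min 0 d" using J by auto
    hence "(c + min 0 d)/2 \<in> f ` pc P p" using J by auto
    hence "(c + min 0 d)/2 \<in> X01" using JX by blast
    thus False using \<open>c < min 0 d\<close> by (auto simp: X01_def)
  qed
  have cX: "c \<in> X01" using c0 d1 J by (auto simp: X01_def)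
  have cQ: "c \<in> f ` P"
  proof (rule ccontr)
    assume "c \<notin> f ` P"
    then obtain p' where p': "p' \<in> P" "c \<in> f ` pc P p'" using img_cover[OF bij v cX] by blast
    define c' where "c' = Inf (f ` pc P p')"
    define d' where "d' = Sup (f ` pc P p')"
    have J': "f ` pc P p' = {c'<..<d'}" using img_pc[OF bij v p'(1)] c'_def d'_def by auto
    have "p \<noteq> p'" using p' J by auto
    have "c < min d d'" using J J' p' by auto
    hence "(c + min d d')/2 \<in> f ` pc P p \<inter> f ` pc P p'" using J J' p' by auto
    thus False using img_disj[OF bij v pP p'(1) \<open>p \<noteq> p'\<close>] by blast
  qed
  have dQ: "d \<in> f ` P \<or> d = 1"
  proof (rule ccontr)
    assume a: "\<not> (d \<in> f ` P \<or> d = 1)"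
    hence dX: "d \<in> X01" using d1 c0 J by (auto simp: X01_def)
    then obtain p' where p': "p' \<in> P" "d \<in> f ` pc P p'" using img_cover[OF bij v dX] a by blast
    define c' where "c' = Inf (f ` pc P p')"
    define d' where "d' = Sup (f ` pc P p')"
    have J': "f ` pc P p' = {c'<..<d'}" using img_pc[OF bij v p'(1)] c'_def d'_def by auto
    have "p \<noteq> p'" using p' J by auto
    have "max c c' < d" using J J' p' by auto
    hence "(max c c' + d)/2 \<in> f ` pc P p \<inter> f ` pc P p'" using J J' p' by auto
    thus False using img_disj[OF bij v pP p'(1) \<open>p \<noteq> p'\<close>] by blast
  qed
  have noQ: "{c<..<d} \<inter> f ` P = {}"
  proof -
    have "inj_on f X01" using bij bij_betw_imp_inj_on by blast
    hence "f ` pc P p \<inter> f ` P = {}" using pc_disj_P[OF fin(1,2) pP] pc_sub[OF fin(1,2) pP] fin(2)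
      by (auto simp: inj_on_def) blast
    thus ?thesis using J by simp
  qed
  have "nxt (f ` P) c = d"
  proof (rule antisym)
    show "nxt (f ` P) c \<le> d" using dQ nxt_props[OF Q cQ] J by auto
    show "d \<le> nxt (f ` P) c"
    proof (rule ccontr)
      assume "\<not> d \<le> nxt (f ` P) c"
      hence "nxt (f ` P) c \<in> {c<..<d}" using nxt_props[OF Q cQ] by auto
      moreover have "nxt (f ` P) c \<in> f ` P" using nxt_props[OF Q cQ] d1 calculation by auto
      ultimately show False using noQ by blast
    qed
  qed
  thus "sg f P p \<in> f ` P" "f ` pc P p = pc (f ` P) (sg f P p)"
    using cQ J c_def by (auto simp: sg_def pc_def)
qed

lemma sg_bij:
  assumes bij: "bij_betw f X01 X01" and v: "validP f P"
  shows "bij_betw (sg f P) P (f ` P)"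
proof -
  have fin: "finite P" "P \<subseteq> X01" using v by (auto simp: validP_def)
  have inj: "inj_on (sg f P) P"
  proof (rule inj_onI)
    fix p p' assume a: "p \<in> P" "p' \<in> P" "sg f P p = sg f P p'"
    show "p = p'"
    proof (rule ccontr)
      assume "p \<noteq> p'"
      have "f ` pc P p = f ` pc P p'" using sg_main(2)[OF bij v a(1)] sg_main(2)[OF bij v a(2)] a(3) by simp
      thus False using img_disj[OF bij v a(1,2) \<open>p \<noteq> p'\<close>] pc_ne[OF fin a(1)] by auto
    qed
  qed
  have sub: "sg f P ` P \<subseteq> f ` P" using sg_main(1)[OF bij v] by auto
  have "inj_on f P" using bij fin(2) bij_betw_imp_inj_on inj_on_subset by blast
  hence "card (f ` P) = card P" by (simp add: card_image)
  moreover have "card (sg f P ` P) = card P" using inj by (simp add: card_image)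
  ultimately have "sg f P ` P = f ` P" using sub fin by (metis card_subset_eq finite_imageI)
  thus ?thesis using inj by (simp add: bij_betw_def)
qed

definition pim :: "(real \<Rightarrow> real) \<Rightarrow> real set \<Rightarrow> real \<Rightarrow> real" where
  "pim f P y = (if y \<in> P then (THE z. z \<in> P \<and> sg f P z = f y) else y)"

lemma pim_char:
  assumes bij: "bij_betw f X01 X01" and v: "validP f P" and y: "y \<in> P" and z: "z \<in> P" "sg f P z = f y"
  shows "pim f P y = z"
proof -
  have inj: "inj_on (sg f P) P" using sg_bij[OF bij v] bij_betw_imp_inj_on by blast
  have "(THE z. z \<in> P \<and> sg f P z = f y) = z"
  proof (rule the_equality)
    show "z \<in> P \<and> sg f P z = f y" using z by simp
    fix w assume "w \<in> P \<and> sg f P w = f y"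
    thus "w = z" using z inj unfolding inj_on_def by metis
  qed
  thus ?thesis using y by (simp add: pim_def)
qed

lemma pim_P:
  assumes bij: "bij_betw f X01 X01" and v: "validP f P" and y: "y \<in> P"
  shows "pim f P y \<in> P" "sg f P (pim f P y) = f y"
proof -
  have "f y \<in> sg f P ` P" using sg_bij[OF bij v] y bij_betw_imp_surj_on by blast
  then obtain z where "z \<in> P" "sg f P z = f y" by force
  thus "pim f P y \<in> P" "sg f P (pim f P y) = f y" using pim_char[OF bij v y] by auto
qed

lemma pim_out: "y \<notin> P \<Longrightarrow> pim f P y = y"
  by (simp add: pim_def)

lemma pim_perm:
  assumes bij: "bij_betw f X01 X01" and v: "validP f P"
  shows "pim f P permutes P" "permutation (pim f P)"
proof -
  have fin: "finite P" "P \<subseteq> X01" using v by (auto simp: validP_def)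
  have injf: "inj_on f P" using bij fin(2) bij_betw_imp_inj_on inj_on_subset by blast
  have inj: "inj_on (pim f P) P"
  proof (rule inj_onI)
    fix y y' assume a: "y \<in> P" "y' \<in> P" "pim f P y = pim f P y'"
    have "f y = f y'" using pim_P(2)[OF bij v a(1)] pim_P(2)[OF bij v a(2)] a(3) by simp
    thus "y = y'" using injf a(1,2) by (simp add: inj_on_eq_iff)
  qed
  have "pim f P ` P \<subseteq> P" using pim_P(1)[OF bij v] by blast
  hence "pim f P ` P = P" using endo_inj_surj[OF fin(1) _ inj] by blast
  hence "bij_betw (pim f P) P P" using inj by (simp add: bij_betw_def)
  thus "pim f P permutes P" by (rule bij_imp_permutes) (simp add: pim_out)
  thus "permutation (pim f P)" using fin(1) by (rule permutes_imp_permutation[rotated])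
qed

definition flp :: "(real \<Rightarrow> real) \<Rightarrow> real set \<Rightarrow> real \<Rightarrow> bool" where
  "flp f P p \<longleftrightarrow> (\<exists>x\<in>pc P p. \<exists>y\<in>pc P p. x < y \<and> f y < f x)"

definition sbit :: "(real \<Rightarrow> real) \<Rightarrow> bit" where
  "sbit p = (if evenperm p then 0 else 1)"

definition val :: "(real \<Rightarrow> real) \<Rightarrow> real set \<Rightarrow> bit" where
  "val f P = sbit (pim f P) + (\<Sum>p\<in>P. if flp f P p then 1 else 0)"

lemma sbit_comp: "permutation p \<Longrightarrow> permutation q \<Longrightarrow> sbit (p \<circ> q) = sbit p + sbit q"
  by (simp add: sbit_def evenperm_comp)

lemma sbit_swap: "a \<noteq> b \<Longrightarrow> permutation q \<Longrightarrow> sbit (Transposition.transpose a b \<circ> q) = 1 + sbit q"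
  by (simp add: sbit_comp permutation_swap_id) (simp add: sbit_def evenperm_swap permutation_swap_id)

lemma nxt_eqI:
  assumes "finite P" "P \<subseteq> X01" "p \<in> P" "d \<in> P \<or> d = 1" "p < d" "d \<le> 1" "\<And>q. q \<in> P \<Longrightarrow> p < q \<Longrightarrow> d \<le> q"
  shows "nxt P p = d"
proof (rule antisym)
  show "nxt P p \<le> d" using assms(4,5) nxt_props(2,4)[OF assms(1-3)] by auto
  show "d \<le> nxt P p" using assms(6,7) nxt_props(1,3)[OF assms(1-3)] by auto
qed

lemma Inf_end:
  fixes f :: "real \<Rightarrow> real"
  assumes "isCont f x" "S \<noteq> {}" "\<And>y. y \<in> S \<Longrightarrow> f x < f y" "\<And>e. e > 0 \<Longrightarrow> \<exists>y\<in>S. \<bar>y - x\<bar> < e"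
  shows "Inf (f ` S) = f x"
proof (rule antisym)
  have lb: "\<And>t. t \<in> f ` S \<Longrightarrow> f x \<le> t" using assms(3) less_imp_le by blast
  hence bb: "bdd_below (f ` S)" unfolding bdd_below_def by blast
  show "f x \<le> Inf (f ` S)" using assms(2) lb by (intro cInf_greatest) auto
  show "Inf (f ` S) \<le> f x"
  proof (rule ccontr)
    assume "\<not> Inf (f ` S) \<le> f x"
    hence e: "Inf (f ` S) - f x > 0" by simp
    obtain d where d: "d > 0" "\<And>y. \<bar>y - x\<bar> < d \<Longrightarrow> \<bar>f y - f x\<bar> < Inf (f ` S) - f x"
      using assms(1)[unfolded continuous_at_eps_delta, rule_format, OF e] by (auto simp: dist_real_def)
    obtain y where "y \<in> S" "\<bar>y - x\<bar> < d" using assms(4) d(1) by blast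
    hence "\<bar>f y - f x\<bar> < Inf (f ` S) - f x" using d(2) by blast
    hence "f y < Inf (f ` S)" by linarith
    moreover have "Inf (f ` S) \<le> f y" using bb \<open>y \<in> S\<close> by (simp add: cInf_lower)
    ultimately show False by simp
  qed
qed

lemma Inf_sub:
  fixes S T :: "real set"
  assumes "S \<subseteq> T" "S \<noteq> {}" "bdd_below T" "\<And>t. t \<in> T \<Longrightarrow> \<exists>s\<in>S. s \<le> t"
  shows "Inf S = Inf T"
proof (rule antisym)
  show "Inf T \<le> Inf S" using assms(2,3,1) by (rule cInf_superset_mono)
  have "bdd_below S" using assms(3,1) by (rule bdd_below_mono)
  show "Inf S \<le> Inf T"
  proof (rule cInf_greatest)
    show "T \<noteq> {}" using assms by auto
    fix t assume "t \<in> T"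
    then obtain s where "s \<in> S" "s \<le> t" using assms(4) by blast
    thus "Inf S \<le> t" using \<open>bdd_below S\<close> by (meson cInf_lower order_trans)
  qed
qed

lemma bit11: "(1 + u) + (1 + w) = u + (w::bit)"
  by (cases u; cases w) simp_all

lemma refine:
  assumes bij: "bij_betw f X01 X01" and v: "validP f P" and x: "x \<in> X01" "x \<notin> P"
  shows "val f (insert x P) = val f P"
proof -
  have fin: "finite P" "P \<subseteq> X01" "0 \<in> P" using v by (auto simp: validP_def)
  define P1 where "P1 = insert x P"
  have v1: "validP f P1" using v x unfolding validP_def P1_def by auto
  have fin1: "finite P1" "P1 \<subseteq> X01" using v1 by (auto simp: validP_def)
  obtain a where a: "a \<in> P" "x \<in> pc P a" using pc_cover[OF fin x] by blast
  define b where "b = nxt P a"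
  have ax: "a < x" "x < b" using a(2) b_def by (auto simp: pc_def)
  have b1: "b \<le> 1" "b \<in> P \<or> b = 1" using nxt_props[OF fin(1,2) a(1)] b_def by auto
  have a0: "0 \<le> a" using a(1) fin(2) by (auto simp: X01_def)
  have aP1: "a \<in> P1" and xP1: "x \<in> P1" using a(1) P1_def by auto
  have n1: "nxt P1 a = x"
  proof (rule nxt_eqI[OF fin1 aP1])
    show "x \<in> P1 \<or> x = 1" using xP1 by simp
    show "a < x" "x \<le> 1" using ax b1 by auto
    fix q assume "q \<in> P1" "a < q"
    thus "x \<le> q" using nxt_props(4)[OF fin(1,2) a(1), of q] b_def ax P1_def by auto
  qed
  have n2: "nxt P1 x = b"
  proof (rule nxt_eqI[OF fin1 xP1])
    show "b \<in> P1 \<or> b = 1" using b1 P1_def by auto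
    show "x < b" "b \<le> 1" using ax b1 by auto
    fix q assume "q \<in> P1" "x < q"
    thus "b \<le> q" using nxt_props(4)[OF fin(1,2) a(1), of q] b_def ax P1_def by auto
  qed
  have n3: "nxt P1 p = nxt P p" if p: "p \<in> P" "p \<noteq> a" for p
  proof (rule nxt_eqI[OF fin1])
    show "p \<in> P1" using p P1_def by simp
    show "nxt P p \<in> P1 \<or> nxt P p = 1" "p < nxt P p" "nxt P p \<le> 1"
      using nxt_props[OF fin(1,2) p(1)] P1_def by auto
    fix q assume q: "q \<in> P1" "p < q"
    show "nxt P p \<le> q"
    proof (cases "q = x")
      case True
      show ?thesis
      proof (rule ccontr)
        assume "\<not> nxt P p \<le> q"
        hence "x \<in> pc P p" using True q by (auto simp: pc_def)
        thus False using pc_disj[OF fin(1,2) p(1) a(1) p(2)] a(2) by blast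
      qed
    next
      case False thus ?thesis using q nxt_props(4)[OF fin(1,2) p(1)] P1_def by auto
    qed
  qed
  have pc1: "pc P1 a = {a<..<x}" "pc P1 x = {x<..<b}" using n1 n2 by (auto simp: pc_def)
  have pc3: "pc P1 p = pc P p" if "p \<in> P" "p \<noteq> a" for p using n3[OF that] by (simp add: pc_def)
  have pca: "pc P a = {a<..<b}" using b_def by (simp add: pc_def)
  have xi: "x \<in> interior X01" using a0 ax b1 by (auto simp: X01_def)
  have "continuous (at x within X01) f" using v x by (auto simp: validP_def)
  hence ic: "isCont f x" using at_within_interior[OF xi] by simp
  have sg3: "sg f P1 p = sg f P p" if "p \<in> P" "p \<noteq> a" for p using pc3[OF that] by (simp add: sg_def)
  have Tne: "f ` {a<..<b} \<noteq> {}" using ax by auto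
  have Tsub: "f ` {a<..<b} \<subseteq> X01" using pc_sub[OF fin(1,2) a(1)] pca bij bij_betw_imp_surj_on by blast
  have Tbb: "bdd_below (f ` {a<..<b})" using Tsub unfolding bdd_below_def X01_def
    by (metis atLeastLessThan_iff subsetD)
  have M: "strict_mono_on {a<..<b} f \<or> strict_antimono_on {a<..<b} f" using mono_pc[OF bij v a(1)] pca by simp
  have flpa: "flp f P1 a = flp f P a" "flp f P1 x = flp f P a"
  proof -
    have "(flp f P1 a \<longleftrightarrow> flp f P a) \<and> (flp f P1 x \<longleftrightarrow> flp f P a)"
    proof (cases "strict_mono_on {a<..<b} f")
      case True
      have "\<not> (\<exists>u\<in>S. \<exists>w\<in>S. u < w \<and> f w < f u)" if "S \<subseteq> {a<..<b}" for S
        using True that unfolding monotone_on_def by (meson less_asym subsetD)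
      note h = this
      have "\<not> flp f P1 a" "\<not> flp f P1 x" "\<not> flp f P a" unfolding flp_def pc1 pca
        using h[of "{a<..<x}"] h[of "{x<..<b}"] h[of "{a<..<b}"] ax by auto
      thus ?thesis by simp
    next
      case False
      hence D: "strict_antimono_on {a<..<b} f" using M by simp
      have "\<exists>u\<in>{l<..<r}. \<exists>w\<in>{l<..<r}. u < w \<and> f w < f u" if "a \<le> l" "l < r" "r \<le> b" for l r
      proof -
        have "l + (r-l)/3 \<in> {a<..<b}" "l + 2*(r-l)/3 \<in> {a<..<b}" "l + (r-l)/3 < l + 2*(r-l)/3"
          using that by (auto simp: field_simps)
        hence "f (l + 2*(r-l)/3) < f (l + (r-l)/3)" using D unfolding monotone_on_def by blast
        moreover have "l + (r-l)/3 \<in> {l<..<r}" "l + 2*(r-l)/3 \<in> {l<..<r}" using that by (auto simp: field_simps)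
        ultimately show ?thesis using \<open>l + (r-l)/3 < l + 2*(r-l)/3\<close> by blast
      qed
      from this[of a b] this[of a x] this[of x b] show ?thesis unfolding flp_def pc1 pca using ax by auto
    qed
    thus "flp f P1 a = flp f P a" "flp f P1 x = flp f P a" by auto
  qed
  have sumeq: "(\<Sum>p\<in>P. if flp f P1 p then 1 else 0) = (\<Sum>p\<in>P. if flp f P p then (1::bit) else 0)"
  proof (rule sum.cong)
    fix p assume "p \<in> P"
    thus "(if flp f P1 p then 1 else 0) = (if flp f P p then (1::bit) else 0)"
      using flpa(1) pc3[of p] by (cases "p = a") (auto simp: flp_def)
  qed simp
  have sum1: "(\<Sum>p\<in>P1. if flp f P1 p then 1 else 0) = (if flp f P a then 1 else 0) + (\<Sum>p\<in>P. if flp f P p then (1::bit) else 0)"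
    unfolding P1_def using fin(1) x(2) sumeq flpa(2) P1_def by simp
  show ?thesis
  proof (cases "strict_mono_on {a<..<b} f")
    case True
    have nf: "\<not> flp f P a" unfolding flp_def pca using True unfolding monotone_on_def by (meson less_asym)
    have sga: "sg f P1 a = sg f P a" unfolding sg_def pc1 pca
    proof (rule Inf_sub)
      show "f ` {a<..<x} \<subseteq> f ` {a<..<b}" "f ` {a<..<x} \<noteq> {}" using ax by auto
      show "bdd_below (f ` {a<..<b})" by (rule Tbb)
      fix t assume "t \<in> f ` {a<..<b}"
      then obtain y where y: "y \<in> {a<..<b}" "t = f y" by auto
      show "\<exists>s\<in>f ` {a<..<x}. s \<le> t"
      proof (cases "y < x")
        case True thus ?thesis using y by auto
      next
        case False
        have "(a+x)/2 \<in> {a<..<b}" "(a+x)/2 < y" using ax y False by auto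
        hence "f ((a+x)/2) < f y" using True y unfolding monotone_on_def by blast
        moreover have "(a+x)/2 \<in> {a<..<x}" using ax by auto
        ultimately show ?thesis using y by (metis imageI less_imp_le)
      qed
    qed
    have sgx: "sg f P1 x = f x" unfolding sg_def pc1
    proof (rule Inf_end[OF ic])
      show "{x<..<b} \<noteq> {}" using ax by auto
      show "f x < f y" if "y \<in> {x<..<b}" for y using True that ax unfolding monotone_on_def by auto
      fix e :: real assume "e > 0"
      hence "x + min e (b-x)/2 \<in> {x<..<b}" "\<bar>(x + min e (b-x)/2) - x\<bar> < e" using ax by (auto simp: min_def field_simps)
      thus "\<exists>y\<in>{x<..<b}. \<bar>y - x\<bar> < e" by blast
    qed
    have "pim f P1 = pim f P"
    proof
      fix y show "pim f P1 y = pim f P y"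
      proof (cases "y \<in> P")
        case True
        have z: "pim f P y \<in> P" "sg f P (pim f P y) = f y" using pim_P[OF bij v True] by auto
        have "sg f P1 (pim f P y) = f y" using z sg3 sga by (cases "pim f P y = a") auto
        thus ?thesis using pim_char[OF bij v1, of y "pim f P y"] z True P1_def by auto
      next
        case False
        show ?thesis
        proof (cases "y = x")
          case True thus ?thesis using pim_char[OF bij v1 xP1 xP1] sgx pim_out[OF x(2)] by simp
        next
          case False thus ?thesis using \<open>y \<notin> P\<close> pim_out[of y P1] pim_out[of y P] P1_def by auto
        qed
      qed
    qed
    thus ?thesis unfolding val_def using sum1 nf P1_def by simp
  next
    case False
    hence D: "strict_antimono_on {a<..<b} f" using M by simp
    have yf: "flp f P a" unfolding flp_def pca
    proof -
      have "(a+x)/2 \<in> {a<..<b}" "x \<in> {a<..<b}" "(a+x)/2 < x" using ax by auto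
      moreover hence "f x < f ((a+x)/2)" using D unfolding monotone_on_def by blast
      ultimately show "\<exists>u\<in>{a<..<b}. \<exists>w\<in>{a<..<b}. u < w \<and> f w < f u" by blast
    qed
    have sgx: "sg f P1 x = sg f P a" unfolding sg_def pc1 pca
    proof (rule Inf_sub)
      show "f ` {x<..<b} \<subseteq> f ` {a<..<b}" "f ` {x<..<b} \<noteq> {}" using ax by auto
      show "bdd_below (f ` {a<..<b})" by (rule Tbb)
      fix t assume "t \<in> f ` {a<..<b}"
      then obtain y where y: "y \<in> {a<..<b}" "t = f y" by auto
      show "\<exists>s\<in>f ` {x<..<b}. s \<le> t"
      proof (cases "x < y")
        case True thus ?thesis using y by auto
      next
        case False
        have "(x+b)/2 \<in> {a<..<b}" "y < (x+b)/2" using ax y False by auto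
        hence "f ((x+b)/2) < f y" using D y unfolding monotone_on_def by blast
        moreover have "(x+b)/2 \<in> {x<..<b}" using ax by auto
        ultimately show ?thesis using y by (metis imageI less_imp_le)
      qed
    qed
    have sga: "sg f P1 a = f x" unfolding sg_def pc1
    proof (rule Inf_end[OF ic])
      show "{a<..<x} \<noteq> {}" using ax by auto
      show "f x < f y" if "y \<in> {a<..<x}" for y using D that ax unfolding monotone_on_def by auto
      fix e :: real assume "e > 0"
      hence "x - min e (x-a)/2 \<in> {a<..<x}" "\<bar>(x - min e (x-a)/2) - x\<bar> < e" using ax by (auto simp: min_def field_simps)
      thus "\<exists>y\<in>{a<..<x}. \<bar>y - x\<bar> < e" by blast
    qed
    have xa: "x \<noteq> a" using ax by simp
    have "pim f P1 = Transposition.transpose a x \<circ> pim f P"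
    proof
      fix y show "pim f P1 y = (Transposition.transpose a x \<circ> pim f P) y"
      proof (cases "y \<in> P")
        case True
        have z: "pim f P y \<in> P" "sg f P (pim f P y) = f y" using pim_P[OF bij v True] by auto
        show ?thesis
        proof (cases "pim f P y = a")
          case True
          hence "pim f P1 y = x" using pim_char[OF bij v1, of y x] z \<open>y \<in> P\<close> sgx P1_def by auto
          thus ?thesis using True by simp
        next
          case False
          hence "pim f P1 y = pim f P y" using pim_char[OF bij v1, of y "pim f P y"] z \<open>y \<in> P\<close> sg3 P1_def by auto
          moreover have "pim f P y \<noteq> x" using z x(2) by auto
          ultimately show ?thesis using False by (simp add: transpose_def)
        qed
      next
        case False
        show ?thesis
        proof (cases "y = x")
          case True thus ?thesis using pim_char[OF bij v1 xP1 aP1] sga pim_out[OF x(2)] by (simp add: transpose_def)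
        next
          case False
          moreover have "y \<noteq> a" using a(1) \<open>y \<notin> P\<close> by auto
          ultimately show ?thesis using \<open>y \<notin> P\<close> pim_out[of y P1] pim_out[of y P] P1_def by (auto simp: transpose_def)
        qed
      qed
    qed
    hence "sbit (pim f P1) = 1 + sbit (pim f P)" using sbit_swap[OF xa[symmetric] pim_perm(2)[OF bij v]] by simp
    thus ?thesis unfolding val_def using sum1 yf P1_def by (simp only: bit11 if_True)
  qed
qed

lemma valid_mono:
  assumes "validP f P" "P \<subseteq> P'" "finite P'" "P' \<subseteq> X01"
  shows "validP f P'"
  using assms unfolding validP_def by auto

lemma val_sup_aux:
  assumes bij: "bij_betw f X01 X01" and v: "validP f P"
  shows "finite A \<Longrightarrow> A \<subseteq> X01 \<Longrightarrow> val f (P \<union> A) = val f P"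
proof (induction A rule: finite_induct)
  case empty thus ?case by simp
next
  case (insert x A)
  have "finite P" "P \<subseteq> X01" using v by (auto simp: validP_def)
  hence vA: "validP f (P \<union> A)" using insert.hyps(1) insert.prems
    by (intro valid_mono[OF v]) auto
  show ?case
  proof (cases "x \<in> P \<union> A")
    case True
    hence "P \<union> insert x A = P \<union> A" by auto
    thus ?thesis using insert by simp
  next
    case False
    have "P \<union> insert x A = insert x (P \<union> A)" by auto
    moreover have "x \<in> X01" using insert.prems by simp
    ultimately show ?thesis using refine[OF bij vA _ False] insert.IH insert.prems by simp
  qed
qed

lemma val_indep:
  assumes bij: "bij_betw f X01 X01" and v: "validP f P" and v': "validP f P'"
  shows "val f P = val f P'"
proof -
  have a: "finite P'" "P' \<subseteq> X01" "finite P" "P \<subseteq> X01" using v v' unfolding validP_def by auto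
  have "val f (P \<union> P') = val f P" using val_sup_aux[OF bij v a(1,2)] .
  moreover have "val f (P' \<union> P) = val f P'" using val_sup_aux[OF bij v' a(3,4)] .
  ultimately show ?thesis by (simp add: Un_commute)
qed

definition eps :: "(real \<Rightarrow> real) \<Rightarrow> bit" where
  "eps f = (if \<exists>P. validP f P then val f (SOME P. validP f P) else 0)"

lemma eps_val:
  assumes bij: "bij_betw f X01 X01" and v: "validP f P"
  shows "eps f = val f P"
proof -
  have "validP f (SOME P. validP f P)" using v by (rule someI)
  hence "val f (SOME P. validP f P) = val f P" using v val_indep[OF bij] by blast
  thus ?thesis using v unfolding eps_def by auto
qed

lemma swapidseq_conj:
  fixes g :: "'a \<Rightarrow> 'a"
  assumes g: "bij g"
  shows "swapidseq n p \<Longrightarrow> swapidseq n (inv g \<circ> p \<circ> g)"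
proof (induction rule: swapidseq.induct)
  case id
  have e: "(\<lambda>x. inv g (g x)) = (\<lambda>x. x)" using g by (simp add: bij_is_inj)
  show ?case using e by (simp add: comp_def id_def)
next
  case (comp_Suc n p a b)
  have "Transposition.transpose a b \<circ> g = g \<circ> Transposition.transpose (inv g a) (inv g b)"
    using g by (rule transpose_comp_eq)
  note T = this
  have e: "inv g \<circ> (Transposition.transpose a b \<circ> p) \<circ> g
      = Transposition.transpose (inv g a) (inv g b) \<circ> (inv g \<circ> p \<circ> g)"
  proof
    fix x
    define y where "y = p (g x)"
    have gy: "g (inv g y) = y" using g by (simp add: bij_is_surj surj_f_inv_f)
    have "Transposition.transpose a b (g (inv g y)) = g (Transposition.transpose (inv g a) (inv g b) (inv g y))"
      using fun_cong[OF T, of "inv g y"] by simp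
    hence "Transposition.transpose a b y = g (Transposition.transpose (inv g a) (inv g b) (inv g y))"
      using gy by simp
    hence "inv g (Transposition.transpose a b y) = Transposition.transpose (inv g a) (inv g b) (inv g y)"
      using g by (simp add: bij_is_inj)
    thus "(inv g \<circ> (Transposition.transpose a b \<circ> p) \<circ> g) x
      = (Transposition.transpose (inv g a) (inv g b) \<circ> (inv g \<circ> p \<circ> g)) x"
      by (simp add: y_def)
  qed
  have "inj (inv g)" using g by (simp add: bij_imp_bij_inv bij_is_inj)
  hence "inv g a \<noteq> inv g b" using comp_Suc(2) by (simp add: inj_eq)
  thus ?case unfolding e by (rule swapidseq.comp_Suc[OF comp_Suc.IH])
qed

lemma conj_perm:
  fixes g :: "'a \<Rightarrow> 'a"
  assumes g: "bij g" and p: "permutation p"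
  shows "permutation (inv g \<circ> p \<circ> g)" "evenperm (inv g \<circ> p \<circ> g) = evenperm p"
proof -
  obtain n where n: "swapidseq n p" using p permutation_def by blast
  hence n': "swapidseq n (inv g \<circ> p \<circ> g)" using swapidseq_conj[OF g] by blast
  thus "permutation (inv g \<circ> p \<circ> g)" using permutation_def by blast
  show "evenperm (inv g \<circ> p \<circ> g) = evenperm p"
    using evenperm_unique[OF n' refl] evenperm_unique[OF n refl] by simp
qed

lemma PChat_bij: "f \<in> PChat \<Longrightarrow> bij f"
proof -
  assume "f \<in> PChat"
  hence "bij_betw f X01 X01" "\<And>x. x \<notin> X01 \<Longrightarrow> f x = x" by (auto simp: PChat_def)
  hence "f permutes X01" by (rule bij_imp_permutes)
  thus "bij f" by (rule permutes_bij)
qed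

lemma PChat_valid: "f \<in> PChat \<Longrightarrow> \<exists>P. validP f P"
proof -
  assume "f \<in> PChat"
  then obtain F where F: "finite F" "F \<subseteq> X01" "\<forall>x \<in> X01 - F. continuous (at x within X01) f"
    by (auto simp: PChat_def)
  have "validP f (insert 0 F)" using F unfolding validP_def X01_def by auto
  thus ?thesis by blast
qed

lemma flp_pts:
  fixes h :: "real \<Rightarrow> real"
  assumes "strict_mono_on I h \<or> strict_antimono_on I h" "s \<in> I" "t \<in> I" "s < t"
  shows "(\<exists>x\<in>I. \<exists>y\<in>I. x < y \<and> h y < h x) \<longleftrightarrow> h t < h s"
  using assms unfolding monotone_on_def by (meson less_asym)

lemma bit_xor: "(if A \<noteq> B then 1 else 0) = (if A then 1 else 0) + (if B then 1 else (0::bit))"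
  by auto

lemma comp_main:
  assumes f: "f \<in> PChat" and g: "g \<in> PChat"
  shows "eps (f \<circ> g) = eps f + eps g"
proof -
  have bf: "bij_betw f X01 X01" and bg: "bij_betw g X01 X01" using f g by (auto simp: PChat_def)
  have Bg: "bij g" using PChat_bij[OF g] .
  obtain Pf where vPf: "validP f Pf" using PChat_valid[OF f] by blast
  obtain Pg where vPg: "validP g Pg" using PChat_valid[OF g] by blast
  have Pf: "finite Pf" "Pf \<subseteq> X01" "0 \<in> Pf" using vPf by (auto simp: validP_def)
  have Pg: "finite Pg" "Pg \<subseteq> X01" using vPg by (auto simp: validP_def)
  define P where "P = Pg \<union> (g -` Pf \<inter> X01)"
  have "finite (g -` Pf)" using Pf(1) Bg by (simp add: bij_is_inj finite_vimageI)
  hence finP: "finite P" "P \<subseteq> X01" using Pg P_def by auto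
  have vg: "validP g P" using valid_mono[OF vPg _ finP] P_def by auto
  have PfgP: "Pf \<subseteq> g ` P"
  proof
    fix q assume "q \<in> Pf"
    hence "q \<in> X01" using Pf by auto
    then obtain z where "z \<in> X01" "g z = q" using bg bij_betw_imp_surj_on by (metis imageE)
    thus "q \<in> g ` P" using \<open>q \<in> Pf\<close> P_def by auto
  qed
  have gPX: "g ` P \<subseteq> X01" using finP bg bij_betw_imp_surj_on by blast
  have vf: "validP f (g ` P)" using valid_mono[OF vPf PfgP _ gPX] finP by simp
  have bfg: "bij_betw (f \<circ> g) X01 X01" using bg bf by (rule bij_betw_trans)
  have vfg: "validP (f \<circ> g) P"
    unfolding validP_def
  proof (intro conjI ballI)
    show "finite P" "P \<subseteq> X01" using finP by auto
    show "0 \<in> P" using vg by (simp add: validP_def)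
    fix x assume x: "x \<in> X01 - P"
    hence cg: "continuous (at x within X01) g" using vPg P_def by (auto simp: validP_def)
    have "g x \<in> X01" using x bg bij_betw_apply by fastforce
    moreover have "g x \<notin> Pf" using x P_def by auto
    ultimately have "g x \<in> X01 - Pf" by simp
    hence "continuous (at (g x) within X01) f" using vPf by (auto simp: validP_def)
    moreover have "g ` X01 = X01" using bg bij_betw_imp_surj_on by blast
    ultimately show "continuous (at x within X01) (f \<circ> g)" using continuous_within_compose[OF cg] by simp
  qed
  have sgc: "sg (f \<circ> g) P p = sg f (g ` P) (sg g P p)" if p: "p \<in> P" for p
  proof -
    have "(f \<circ> g) ` pc P p = f ` pc (g ` P) (sg g P p)" using sg_main(2)[OF bg vg p] image_comp[of f g "pc P p"] by simp
    thus ?thesis unfolding sg_def[of "f \<circ> g"] sg_def[of f] by simp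
  qed
  have key: "pim (f \<circ> g) P = pim g P \<circ> (inv g \<circ> pim f (g ` P) \<circ> g)"
  proof
    fix y show "pim (f \<circ> g) P y = (pim g P \<circ> (inv g \<circ> pim f (g ` P) \<circ> g)) y"
    proof (cases "y \<in> P")
      case True
      define w where "w = pim f (g ` P) (g y)"
      have gy: "g y \<in> g ` P" using True by simp
      have w: "w \<in> g ` P" "sg f (g ` P) w = f (g y)" using pim_P[OF bf vf gy] w_def by auto
      then obtain z where z: "z \<in> P" "w = g z" by auto
      have iz: "inv g w = z" using z Bg by (simp add: bij_is_inj)
      define z' where "z' = pim g P z"
      have z': "z' \<in> P" "sg g P z' = g z" using pim_P[OF bg vg z(1)] z'_def by auto
      have "sg (f \<circ> g) P z' = (f \<circ> g) y" using sgc[OF z'(1)] z' z w by simp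
      hence "pim (f \<circ> g) P y = z'" using pim_char[OF bfg vfg True z'(1)] by simp
      thus ?thesis using iz z'_def w_def by simp
    next
      case False
      have "g y \<notin> g ` P" using False Bg by (auto simp: bij_def inj_eq)
      hence "pim f (g ` P) (g y) = g y" by (rule pim_out)
      moreover have "inv g (g y) = y" using Bg by (simp add: bij_is_inj)
      ultimately show ?thesis using False pim_out[of y P] by simp
    qed
  qed
  have pg: "permutation (pim g P)" using pim_perm(2)[OF bg vg] .
  have pf: "permutation (pim f (g ` P))" using pim_perm(2)[OF bf vf] .
  have sb: "sbit (pim (f \<circ> g) P) = sbit (pim g P) + sbit (pim f (g ` P))"
    unfolding key using sbit_comp[OF pg conj_perm(1)[OF Bg pf]] conj_perm(2)[OF Bg pf]
    by (simp add: sbit_def)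
  have flc: "flp (f \<circ> g) P p \<longleftrightarrow> (flp g P p \<noteq> flp f (g ` P) (sg g P p))" if p: "p \<in> P" for p
  proof -
    define b where "b = nxt P p"
    have pb: "p < b" using nxt_props(1)[OF finP p] b_def by simp
    define u where "u = p + (b - p)/3"
    define t where "t = p + 2*(b-p)/3"
    have ut: "u \<in> pc P p" "t \<in> pc P p" "u < t" using pb unfolding u_def t_def pc_def b_def[symmetric]
      by (auto simp: field_simps)
    define q where "q = sg g P p"
    have q: "q \<in> g ` P" "g ` pc P p = pc (g ` P) q" using sg_main[OF bg vg p] q_def by auto
    have gut: "g u \<in> pc (g ` P) q" "g t \<in> pc (g ` P) q" using ut q by auto
    have "inj_on g X01" using bg bij_betw_imp_inj_on by blast
    hence gne: "g u \<noteq> g t" using ut pc_sub[OF finP p] by (metis inj_on_contraD less_irrefl subsetD)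
    have f1: "flp (f \<circ> g) P p \<longleftrightarrow> f (g t) < f (g u)"
      unfolding flp_def using flp_pts[OF mono_pc[OF bfg vfg p] ut] by simp
    have g1: "flp g P p \<longleftrightarrow> g t < g u"
      unfolding flp_def using flp_pts[OF mono_pc[OF bg vg p] ut] by simp
    have "inj_on f X01" using bf bij_betw_imp_inj_on by blast
    hence fne: "f (g u) \<noteq> f (g t)" using gne gut pc_sub[OF _ gPX q(1)] finP
      by (metis finite_imageI inj_on_contraD subsetD)
    show ?thesis
    proof (cases "g u < g t")
      case True
      have "flp f (g ` P) q \<longleftrightarrow> f (g t) < f (g u)"
        unfolding flp_def using flp_pts[OF mono_pc[OF bf vf q(1)] gut True] by simp
      thus ?thesis using f1 g1 True q_def by auto
    next
      case False
      hence F: "g t < g u" using gne by auto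
      have "flp f (g ` P) q \<longleftrightarrow> f (g u) < f (g t)"
        unfolding flp_def using flp_pts[OF mono_pc[OF bf vf q(1)] gut(2,1) F] by simp
      thus ?thesis using f1 g1 F fne q_def by auto
    qed
  qed
  have sum: "(\<Sum>p\<in>P. if flp (f \<circ> g) P p then 1 else 0)
     = (\<Sum>p\<in>P. if flp g P p then 1 else 0) + (\<Sum>q\<in>g ` P. if flp f (g ` P) q then 1 else (0::bit))"
  proof -
    have "(\<Sum>p\<in>P. if flp (f \<circ> g) P p then 1 else 0)
       = (\<Sum>p\<in>P. (if flp g P p then 1 else 0) + (if flp f (g ` P) (sg g P p) then 1 else (0::bit)))"
      using flc by (intro sum.cong) (simp_all only: bit_xor)
    also have "\<dots> = (\<Sum>p\<in>P. if flp g P p then 1 else 0) + (\<Sum>p\<in>P. if flp f (g ` P) (sg g P p) then 1 else (0::bit))"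
      by (rule sum.distrib)
    also have "(\<Sum>p\<in>P. if flp f (g ` P) (sg g P p) then 1 else (0::bit)) = (\<Sum>q\<in>g ` P. if flp f (g ` P) q then 1 else (0::bit))"
      by (rule sum.reindex_bij_betw[OF sg_bij[OF bg vg]])
    finally show ?thesis .
  qed
  have "eps (f \<circ> g) = val (f \<circ> g) P" using eps_val[OF bfg vfg] .
  also have "\<dots> = val g P + val f (g ` P)" unfolding val_def sb sum by (simp only: ac_simps)
  also have "\<dots> = eps g + eps f" using eps_val[OF bg vg] eps_val[OF bf vf] by simp
  finally show ?thesis by (metis add.commute)
qed

lemma Sfin_main:
  assumes s: "s \<in> Sfin"
  shows "s \<in> PChat" "eps s = eps_fin s"
proof -
  have bs: "bij_betw s X01 X01" and out: "\<And>x. x \<notin> X01 \<Longrightarrow> s x = x" and fS: "finite {x. s x \<noteq> x}"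
    using s by (auto simp: Sfin_def)
  define S where "S = {x. s x \<noteq> x}"
  have SX: "S \<subseteq> X01" using out S_def by auto
  define P where "P = insert 0 S"
  have finP: "finite P" "P \<subseteq> X01" "0 \<in> P" using fS SX S_def P_def by (auto simp: X01_def)
  have cont: "continuous (at x within X01) s" if x: "x \<in> X01 - P" for x
  proof -
    have "open (- S)" using fS S_def by (simp add: finite_imp_closed open_Compl)
    moreover have "x \<in> - S" using x P_def by auto
    ultimately have "eventually (\<lambda>y. y \<in> - S) (nhds x)" by (rule eventually_nhds_in_open)
    hence "eventually (\<lambda>y. s y = (\<lambda>y. y) y) (nhds x)" by (rule eventually_mono) (simp add: S_def)
    hence "isCont s x \<longleftrightarrow> isCont (\<lambda>y. y) x" by (rule isCont_cong)
    hence "isCont s x" by simp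
    thus ?thesis by (rule continuous_at_imp_continuous_at_within)
  qed
  have vs: "validP s P" using finP cont unfolding validP_def by blast
  show sP: "s \<in> PChat" unfolding PChat_def using bs out finP cont by blast
  have injs: "inj s" using PChat_bij[OF sP] bij_is_inj by blast
  have idpc: "\<And>y. y \<in> pc P p \<Longrightarrow> s y = y" if p: "p \<in> P" for p
    using pc_disj_P[OF finP(1,2) p] P_def S_def by auto
  have sgp: "sg s P p = p" if p: "p \<in> P" for p
  proof -
    have "s ` pc P p = pc P p" using idpc[OF p] by (simp add: image_cong)
    moreover have "p < nxt P p" using nxt_props(1)[OF finP(1,2) p] .
    ultimately show ?thesis by (simp add: sg_def pc_def)
  qed
  have nf: "\<not> flp s P p" if p: "p \<in> P" for p
    using idpc[OF p] unfolding flp_def by auto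
  have "pim s P = s"
  proof
    fix y show "pim s P y = s y"
    proof (cases "y \<in> P")
      case True
      have "s y \<in> P"
      proof (cases "s y = y")
        case True thus ?thesis using \<open>y \<in> P\<close> by simp
      next
        case False
        hence "s (s y) \<noteq> s y" using injs by (metis injD)
        thus ?thesis using P_def S_def by auto
      qed
      thus ?thesis using pim_char[OF bs vs True \<open>s y \<in> P\<close>] sgp by simp
    next
      case False
      thus ?thesis using pim_out[OF False] P_def S_def by auto
    qed
  qed
  moreover have "(\<Sum>p\<in>P. if flp s P p then 1 else (0::bit)) = 0" using nf by simp
  ultimately have "val s P = eps_fin s" unfolding val_def sbit_def eps_fin_def by simp
  thus "eps s = eps_fin s" using eps_val[OF bs vs] by simp
qed

theorem theorem1p1:
  shows "\<exists>\<epsilon> :: (real \<Rightarrow> real) \<Rightarrow> bit.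
           (\<forall>f \<in> PChat. \<forall>g \<in> PChat. \<epsilon> (f \<circ> g) = \<epsilon> f + \<epsilon> g) \<and>
           (\<forall>s \<in> Sfin. \<epsilon> s = eps_fin s)"
  using comp_main Sfin_main(2) by blast

end
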